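(* Let $d\ge1$ and $a_1,\dots,a_d>0$, and define $F:(0,\infty)\to\mathbb{R}$ by $$F(k)=2k\sum_{j=1}^d\tan\left(\frac{\pi}{2}\left(\frac{ka_j}{\pi}-\left\lfloor\frac{ka_j}{\pi}\right\rfloor\right)\right).$$ Then: (i) a point $k>0$ is a discontinuity of $F$ if and only if $k=m\pi/a_j$ for some $j\in\{1,\dots,d\}$ and some $m\in\mathbb{N}$; (ii) $F$ is strictly increasing on each interval of continuity; (iii) for every $m\in\mathbb{N}$ and $j\in\{1,\dots,d\}$, $\lim_{k\nearrow m\pi/a_j}F(k)=+\infty$.
   Context: $\lfloor\cdot\rfloor$ denotes the floor function and $\mathbb{N}=\{1,2,3,\dots\}$. *)

theory Defs
  imports "HOL-Analysis.Analysis"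
begin

definition Ffun :: "nat \<Rightarrow> (nat \<Rightarrow> real) \<Rightarrow> real \<Rightarrow> real" where
  "Ffun d a k = 2 * k * (\<Sum>j=1..d. tan (pi / 2 * (k * a j / pi - of_int \<lfloor>k * a j / pi\<rfloor>)))"

end

theory Submission
  imports Defs
begin

definition gt :: "(nat \<Rightarrow> real) \<Rightarrow> nat \<Rightarrow> real \<Rightarrow> real" where
  "gt a j k = tan (pi / 2 * (k * a j / pi - of_int \<lfloor>k * a j / pi\<rfloor>))"

lemma Ffun_eq: "Ffun d a = (\<lambda>k. 2 * k * (\<Sum>j=1..d. gt a j k))"
  by (simp add: Ffun_def gt_def fun_eq_iff)

lemma tan_nonneg: "0 \<le> x \<Longrightarrow> x < pi/2 \<Longrightarrow> 0 \<le> tan (x::real)"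
  using tan_gt_zero[of x] by (cases "x = 0") auto

lemma gt_nonneg: "0 \<le> gt a j k"
proof -
  let ?u = "k * a j / pi"
  have "0 \<le> ?u - of_int \<lfloor>?u\<rfloor>" "?u - of_int \<lfloor>?u\<rfloor> < 1" by linarith+
  then have "0 \<le> pi/2 * (?u - of_int \<lfloor>?u\<rfloor>)" "pi/2 * (?u - of_int \<lfloor>?u\<rfloor>) < pi/2"
    by (auto simp: mult_nonneg_nonneg)
  then show ?thesis unfolding gt_def by (rule tan_nonneg)
qed

lemma gt_cont:
  assumes "k * a j / pi \<notin> \<int>"
  shows "isCont (gt a j) k"
proof -
  let ?u = "\<lambda>k. k * a j / pi"
  have cu: "isCont ?u k" by (intro continuous_intros; simp)
  have "((\<lambda>k. floor (?u k)) has_real_derivative 0) (at k)"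
    by (rule floor_has_real_derivative[OF cu assms])
  then have cf: "isCont (\<lambda>k. real_of_int (floor (?u k))) k" by (rule DERIV_isCont)
  let ?h = "\<lambda>k. pi / 2 * (?u k - of_int \<lfloor>?u k\<rfloor>)"
  have ch: "isCont ?h k" using cu cf by (intro continuous_intros; simp)
  have "0 \<le> ?u k - of_int \<lfloor>?u k\<rfloor>" "?u k - of_int \<lfloor>?u k\<rfloor> < 1" by linarith+
  then have "0 \<le> ?h k" "?h k < pi/2" by auto
  then have "0 < cos (?h k)"
    by (intro cos_gt_zero_pi) (use pi_gt_zero in linarith)+
  then have "cos (?h k) \<noteq> 0" by simp
  then have "isCont tan (?h k)" by (rule isCont_tan)
  from isCont_o2[OF ch this] show ?thesis unfolding gt_def by simp
qed

lemma gt_lim: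
  assumes a: "a j > 0" and m: "m \<ge> (1::nat)"
  shows "filterlim (gt a j) at_top (at_left (real m * pi / a j))"
proof -
  define k0 where "k0 = real m * pi / a j"
  define h where "h = (\<lambda>k. pi / 2 * (k * a j / pi - (real m - 1)))"
  have lo: "(real m - 1) * pi / a j < k0" unfolding k0_def using a
    by (simp add: divide_strict_right_mono)
  have ev: "eventually (\<lambda>k. k \<in> {(real m - 1) * pi / a j<..<k0}) (at_left k0)"
    by (rule eventually_at_left_real[OF lo])
  have eq: "eventually (\<lambda>k. tan (h k) = gt a j k) (at_left k0)"
    using ev
  proof eventually_elim
    case (elim k)
    then have k1: "(real m - 1) * pi / a j < k" and k2: "k < k0" by auto
    have "(real m - 1) < k * a j / pi"
      using k1 a by (simp add: field_simps)
    moreover have "k * a j / pi < real m"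
      using k2 a unfolding k0_def by (simp add: field_simps)
    ultimately have "\<lfloor>k * a j / pi\<rfloor> = int m - 1"
      by (intro floor_unique) (use m in auto)
    then show ?case unfolding gt_def h_def using m by (simp add: of_nat_diff)
  qed
  have hlim: "(h \<longlongrightarrow> h k0) (at_left k0)"
    unfolding h_def by (intro tendsto_intros; simp)
  have hk0: "h k0 = pi/2" unfolding h_def k0_def using a by (simp add: field_simps)
  have hlt: "eventually (\<lambda>k. h k < pi/2) (at_left k0)"
    using ev
  proof eventually_elim
    case (elim k)
    then have "k < k0" by auto
    then have "k * a j / pi < real m" using a unfolding k0_def by (simp add: field_simps)
    then show ?case unfolding h_def by (simp add: field_simps)
  qed
  have "filterlim h (at_left (pi/2)) (at_left k0)"
    using tendsto_imp_filterlim_at_left[OF hlim[unfolded hk0] hlt] .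
  then have "filterlim (\<lambda>k. tan (h k)) at_top (at_left k0)"
    by (rule filterlim_compose[OF filterlim_tan_at_left])
  then have "filterlim (gt a j) at_top (at_left k0)"
    by (rule filterlim_cong[THEN iffD1, OF refl refl eq, rotated])
  then show ?thesis unfolding k0_def .
qed

lemma F_lim:
  assumes a: "\<And>j. j \<in> {1..d} \<Longrightarrow> a j > 0" and j: "j \<in> {1..d}" and m: "m \<ge> (1::nat)"
  shows "filterlim (Ffun d a) at_top (at_left (real m * pi / a j))"
proof -
  define k0 where "k0 = real m * pi / a j"
  have k0pos: "k0 > 0" unfolding k0_def using a[OF j] m by auto
  have g: "filterlim (gt a j) at_top (at_left k0)"
    unfolding k0_def using gt_lim[of a j m] a[OF j] m by simp
  have "filterlim (\<lambda>k. k0 * gt a j k) at_top (at_left k0)"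
    by (rule filterlim_tendsto_pos_mult_at_top[OF tendsto_const k0pos g])
  moreover have "eventually (\<lambda>k. k0 * gt a j k \<le> Ffun d a k) (at_left k0)"
  proof -
    have "eventually (\<lambda>k. k \<in> {k0/2<..<k0}) (at_left k0)"
      using k0pos by (intro eventually_at_left_real) simp
    then show ?thesis
    proof (rule eventually_mono)
    fix k assume "k \<in> {k0/2<..<k0}"
    then have kk: "k0 \<le> 2 * k" by auto
    have "gt a j k \<le> (\<Sum>i=1..d. gt a i k)"
      by (rule member_le_sum[OF j]) (auto simp: gt_nonneg)
    moreover have "k0 * gt a j k \<le> 2 * k * gt a j k"
      by (rule mult_right_mono[OF kk gt_nonneg])
    moreover have "0 \<le> 2 * k" using kk k0pos by auto
    ultimately show "k0 * gt a j k \<le> Ffun d a k"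
      unfolding Ffun_eq by (meson mult_left_mono order_trans)
  qed
  qed
  ultimately show ?thesis unfolding k0_def[symmetric]
    by (rule filterlim_at_top_mono)
qed

lemma F_discont:
  assumes a: "\<And>j. j \<in> {1..d} \<Longrightarrow> a j > 0" and j: "j \<in> {1..d}" and m: "m \<ge> (1::nat)"
  shows "\<not> isCont (Ffun d a) (real m * pi / a j)"
proof
  assume c: "isCont (Ffun d a) (real m * pi / a j)"
  then have "(Ffun d a \<longlongrightarrow> Ffun d a (real m * pi / a j)) (at_left (real m * pi / a j))"
    unfolding isCont_def by (rule filterlim_mono[OF _ order_refl]) (rule at_le, simp)
  moreover have "filterlim (Ffun d a) at_infinity (at_left (real m * pi / a j))"
    by (rule filterlim_at_top_imp_at_infinity[OF F_lim[OF a j m]]) auto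
  ultimately show False
    by (intro not_tendsto_and_filterlim_at_infinity[of "at_left (real m * pi / a j)"]) auto
qed

lemma F_cont:
  assumes a: "\<And>j. j \<in> {1..d} \<Longrightarrow> a j > 0" and k: "k > 0"
    and no: "\<not> (\<exists>j\<in>{1..d}. \<exists>m::nat. m \<ge> 1 \<and> k = real m * pi / a j)"
  shows "isCont (Ffun d a) k"
proof -
  have "isCont (gt a j) k" if j: "j \<in> {1..d}" for j
  proof (rule gt_cont, rule notI)
    assume "k * a j / pi \<in> \<int>"
    then obtain n where n: "k * a j / pi = of_int n" by (auto elim: Ints_cases)
    have "k * a j / pi > 0" using k a[OF j] by auto
    then have "n \<ge> 1" using n by auto
    have "k = real (nat n) * pi / a j"
      using n \<open>n \<ge> 1\<close> a[OF j] by (simp add: field_simps)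
    then have "\<exists>m::nat. m \<ge> 1 \<and> k = real m * pi / a j"
      using \<open>n \<ge> 1\<close> by (intro exI[of _ "nat n"]) auto
    then show False using no j by blast
  qed
  then show ?thesis unfolding Ffun_eq by (intro continuous_intros) auto
qed

theorem lemma3p1:
  fixes d :: nat and a :: "nat \<Rightarrow> real"
  assumes "d \<ge> 1" and "\<And>j. j \<in> {1..d} \<Longrightarrow> a j > 0"
  shows "(\<forall>k>0. \<not> isCont (Ffun d a) k \<longleftrightarrow>
            (\<exists>j\<in>{1..d}. \<exists>m::nat. m \<ge> 1 \<and> k = real m * pi / a j))
       \<and> (\<forall>x y. 0 < x \<longrightarrow> x < y \<longrightarrow> (\<forall>t\<in>{x..y}. isCont (Ffun d a) t)
            \<longrightarrow> Ffun d a x < Ffun d a y)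
       \<and> (\<forall>j\<in>{1..d}. \<forall>m::nat. m \<ge> 1 \<longrightarrow>
            filterlim (Ffun d a) at_top (at_left (real m * pi / a j)))"
proof (intro conjI allI impI ballI)
  fix k :: real assume "k > 0"
  then show "\<not> isCont (Ffun d a) k \<longleftrightarrow>
            (\<exists>j\<in>{1..d}. \<exists>m::nat. m \<ge> 1 \<and> k = real m * pi / a j)"
    using F_cont[of d a, OF assms(2)] F_discont[of d a, OF assms(2)] by blast
next
  fix j m assume jm: "j \<in> {1..d}" "1 \<le> (m::nat)"
  show "filterlim (Ffun d a) at_top (at_left (real m * pi / a j))"
    by (rule F_lim[where d=d and a=a, OF assms(2) jm])
next
  fix x y :: real
  assume x: "0 < x" and xy: "x < y" and c: "\<forall>t\<in>{x..y}. isCont (Ffun d a) t"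
  have step: "gt a j x \<le> gt a j y \<and> (gt a j x < gt a j y)" if j: "j \<in> {1..d}" for j
  proof -
    have aj: "a j > 0" using assms(2)[OF j] .
    let ?u = "\<lambda>k. k * a j / pi"
    have uxy: "?u x < ?u y" using aj xy by (simp add: divide_strict_right_mono)
    have fl: "\<lfloor>?u y\<rfloor> = \<lfloor>?u x\<rfloor>"
    proof (rule ccontr)
      assume ne: "\<lfloor>?u y\<rfloor> \<noteq> \<lfloor>?u x\<rfloor>"
      have "\<lfloor>?u x\<rfloor> \<le> \<lfloor>?u y\<rfloor>" using uxy by (intro floor_mono) auto
      define n where "n = \<lfloor>?u x\<rfloor> + 1"
      have n1: "?u x < of_int n" "of_int n \<le> ?u y" unfolding n_def using ne
        \<open>\<lfloor>?u x\<rfloor> \<le> \<lfloor>?u y\<rfloor>\<close> by linarith+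
      have "?u x > 0" using x aj by auto
      then have "n \<ge> 1" using n1 unfolding n_def by linarith
      define t where "t = real (nat n) * pi / a j"
      have tn: "?u t = of_int n" unfolding t_def using aj \<open>n \<ge> 1\<close> by simp
      have "x * a j < t * a j" using n1(1) tn aj by (simp add: field_simps)
      then have "x < t" using aj by (meson mult_less_cancel_right_pos)
      moreover have "t * a j \<le> y * a j" using n1(2) tn aj by (simp add: field_simps)
      then have "t \<le> y" using aj by (meson mult_le_cancel_right_pos)
      ultimately have "isCont (Ffun d a) t" using c by auto
      moreover have "\<not> isCont (Ffun d a) t" unfolding t_def
        by (rule F_discont[of d a, OF assms(2) j]) (use \<open>n \<ge> 1\<close> in auto)
      ultimately show False by blast
    qed
    have "0 \<le> ?u x - of_int \<lfloor>?u x\<rfloor>" "?u y - of_int \<lfloor>?u y\<rfloor> < 1" by linarith+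
    have "tan (pi/2 * (?u x - of_int \<lfloor>?u x\<rfloor>)) < tan (pi/2 * (?u y - of_int \<lfloor>?u y\<rfloor>))"
    proof (rule tan_monotone)
      have "0 \<le> pi/2 * (?u x - of_int \<lfloor>?u x\<rfloor>)"
        using \<open>0 \<le> ?u x - of_int \<lfloor>?u x\<rfloor>\<close> by simp
      then show "- (pi/2) < pi/2 * (?u x - of_int \<lfloor>?u x\<rfloor>)" using pi_gt_zero by linarith
      show "pi/2 * (?u x - of_int \<lfloor>?u x\<rfloor>) < pi/2 * (?u y - of_int \<lfloor>?u y\<rfloor>)"
        using uxy fl by simp
      show "pi/2 * (?u y - of_int \<lfloor>?u y\<rfloor>) < pi/2"
        using \<open>?u y - of_int \<lfloor>?u y\<rfloor> < 1\<close> by simp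
    qed
    then show ?thesis unfolding gt_def by simp
  qed
  have "1 \<in> {1..d}" using assms(1) by auto
  have S: "(\<Sum>j=1..d. gt a j x) < (\<Sum>j=1..d. gt a j y)"
    by (rule sum_strict_mono_ex1) (use step \<open>1 \<in> {1..d}\<close> in auto)
  have "2 * x * (\<Sum>j=1..d. gt a j x) \<le> 2 * y * (\<Sum>j=1..d. gt a j x)"
    using xy by (intro mult_right_mono) (auto intro: sum_nonneg gt_nonneg)
  also have "\<dots> < 2 * y * (\<Sum>j=1..d. gt a j y)"
    using S x xy by simp
  finally show "Ffun d a x < Ffun d a y" unfolding Ffun_eq by simp
qed

end
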